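(* Let $p,q\in(0,1)$ and define $$h(p,q)=4p^2q^4-12p^2q^3+12p^2q^2-4p^2q-2pq^4+8pq^3-12pq^2+8pq,$$ which equals $\mathbb{E}^{(1,1)}_{p,q}[Z_1]=\mathbb{E}[\min(U,V)]$ for independent $U\sim\mathrm{Bin}(4,q)$ and $V\sim\mathrm{Bin}(2,p)$. If $h(p,q)>1$, then $\mathbb{P}^{(1,1)}_{p,q}(\tau=+\infty)>0$.
   Context: Cooperative model: for $p,q\in(0,1)$, a Markov chain $(X_n,Y_n)_{n\ge0}$ on $\mathbb{N}^2$ whose transition law from state $(x,y)$ is $\mu_{(x,y)}=\mathrm{Bin}(2,q)^{*(x+y)}\otimes\mathrm{Bin}(2,p)^{*\min(x,y)}$, i.e. given the past, $X_{n+1}\sim\mathrm{Bin}(2(X_n+Y_n),q)$ and $Y_{n+1}\sim\mathrm{Bin}(2\min(X_n,Y_n),p)$ are independent. $\mathbb{P}^{(x,y)}_{p,q}$ (expectation $\mathbb{E}^{(x,y)}_{p,q}$) denotes the law of this process started from $(x,y)$. $Z_n=\min(X_n,Y_n)$ and $\tau=\inf\{n\ge0: Z_n=0\}$. *)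

theory Defs
  imports "HOL-Probability.Probability"
begin

definition coop_h :: "real \<Rightarrow> real \<Rightarrow> real" where
  "coop_h p q = 4*p^2*q^4 - 12*p^2*q^3 + 12*p^2*q^2 - 4*p^2*q
               - 2*p*q^4 + 8*p*q^3 - 12*p*q^2 + 8*p*q"

text \<open>Probability space carrying an independent array of coin flips:
  coin (True, n, i) is Bernoulli(q) (used for X at step n+1),
  coin (False, n, i) is Bernoulli(p) (used for Y at step n+1).\<close>
definition coop_space :: "real \<Rightarrow> real \<Rightarrow> (bool \<times> nat \<times> nat \<Rightarrow> bool) measure" where
  "coop_space p q =
     PiM UNIV (\<lambda>(b, n, i). measure_pmf (bernoulli_pmf (if b then q else p)))"

text \<open>The cooperative chain (X_n, Y_n) started from s, realised on the coin space:
  X_{n+1} = number of successes among 2(X_n+Y_n) Bernoulli(q) coins, i.e. Bin(2(X_n+Y_n), q);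
  Y_{n+1} = number of successes among 2 min(X_n,Y_n) Bernoulli(p) coins, i.e. Bin(2 min(X_n,Y_n), p);
  fresh independent coins are used at each step.\<close>
fun coop_state :: "(bool \<times> nat \<times> nat \<Rightarrow> bool) \<Rightarrow> nat \<times> nat \<Rightarrow> nat \<Rightarrow> nat \<times> nat" where
  "coop_state \<omega> s 0 = s"
| "coop_state \<omega> s (Suc n) =
     (case coop_state \<omega> s n of (x, y) \<Rightarrow>
        (card {i. i < 2 * (x + y) \<and> \<omega> (True, n, i)},
         card {i. i < 2 * min x y \<and> \<omega> (False, n, i)}))"

definition coop_Z :: "(bool \<times> nat \<times> nat \<Rightarrow> bool) \<Rightarrow> nat \<times> nat \<Rightarrow> nat \<Rightarrow> nat" where
  "coop_Z \<omega> s n = (case coop_state \<omega> s n of (x, y) \<Rightarrow> min x y)"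

text \<open>The event {tau = +infinity} under P^(s): Z_n never hits 0.\<close>
definition coop_survive :: "real \<Rightarrow> real \<Rightarrow> nat \<times> nat \<Rightarrow> (bool \<times> nat \<times> nat \<Rightarrow> bool) set" where
  "coop_survive p q s = {\<omega> \<in> space (coop_space p q). \<forall>n. coop_Z \<omega> s n \<noteq> 0}"

end

theory Submission
  imports Defs
begin

lemma PiM_Pi_pmf:
  fixes c :: "'a \<Rightarrow> 'b::finite pmf"
  assumes fin: "finite J"
  shows "distr (measure_pmf (Pi_pmf J d c)) (PiM J (\<lambda>j. measure_pmf (c j))) (\<lambda>f. restrict f J)
         = PiM J (\<lambda>j. measure_pmf (c j))"
proof (rule product_sigma_finite.PiM_eqI)
  show "product_sigma_finite (\<lambda>j. measure_pmf (c j))"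
    by (simp add: product_sigma_finite_def measure_pmf.sigma_finite_measure_axioms)
  show "finite J" by fact
  show "sets (distr (measure_pmf (Pi_pmf J d c)) (PiM J (\<lambda>j. measure_pmf (c j))) (\<lambda>f. restrict f J)) = sets (PiM J (\<lambda>j. measure_pmf (c j)))"
    by simp
  fix A assume A: "\<And>i. i \<in> J \<Longrightarrow> A i \<in> sets (measure_pmf (c i))"
  have "Pi\<^sub>E J A \<in> sets (Pi\<^sub>M J (\<lambda>j. measure_pmf (c j)))"
    using A by (intro sets_PiM_I_finite fin) auto
  hence "emeasure (distr (measure_pmf (Pi_pmf J d c)) (PiM J (\<lambda>j. measure_pmf (c j))) (\<lambda>f. restrict f J)) (Pi\<^sub>E J A)
     = emeasure (measure_pmf (Pi_pmf J d c)) ((\<lambda>x. restrict x J) -` Pi\<^sub>E J A)"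
    by (subst emeasure_distr) (auto simp: space_PiM)
  also have "\<dots> = emeasure (measure_pmf (Pi_pmf J d c)) (PiE_dflt J d A)"
    by (intro emeasure_eq_AE AE_pmfI) (auto simp: PiE_dflt_def set_Pi_pmf fin)
  also have "\<dots> = (\<Prod>i\<in>J. emeasure (measure_pmf (c i)) (A i))"
    by (simp add: measure_pmf.emeasure_eq_measure measure_Pi_pmf_PiE_dflt fin prod_ennreal)
  finally show "emeasure (distr (measure_pmf (Pi_pmf J d c)) (PiM J (\<lambda>j. measure_pmf (c j))) (\<lambda>f. restrict f J)) (Pi\<^sub>E J A)
     = (\<Prod>i\<in>J. emeasure (measure_pmf (c i)) (A i))" .
qed

lemma transfer_PiM:
  fixes c :: "'a \<Rightarrow> 'b::finite pmf"
  assumes fin: "finite J"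
    and inv: "\<And>\<omega> \<omega>'. (\<And>j. j \<in> J \<Longrightarrow> \<omega> j = \<omega>' j) \<Longrightarrow> P \<omega> = P \<omega>'"
  shows "measure (PiM UNIV (\<lambda>j. measure_pmf (c j))) {\<omega> \<in> space (PiM UNIV (\<lambda>j. measure_pmf (c j))). P \<omega>}
       = measure_pmf.prob (Pi_pmf J d c) {f. P f}"
proof -
  let ?M = "\<lambda>j. measure_pmf (c j)"
  interpret product_prob_space ?M UNIV
    by (intro product_prob_spaceI measure_pmf.prob_space_axioms)
  have invr: "P (restrict \<omega> J) = P \<omega>" for \<omega> by (rule inv) simp
  define R where "R = {a \<in> space (PiM J ?M). P a}"
  have finR: "finite (space (PiM J ?M))"
    using fin by (simp add: space_PiM finite_PiE)
  have R: "R \<in> sets (PiM J ?M)"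
  proof (rule sets.countable)
    fix a assume "a \<in> R"
    hence "a \<in> PiE J (\<lambda>_. UNIV)" by (simp add: R_def space_PiM)
    hence "{a} = PiE J (\<lambda>j. {a j})" by (auto simp: PiE_iff extensional_def fun_eq_iff) metis
    thus "{a} \<in> sets (PiM J ?M)" using fin by (auto intro!: sets_PiM_I_finite)
  next
    show "countable R" using finR by (intro countable_finite) (auto simp: R_def)
  qed
  have "{\<omega> \<in> space (PiM UNIV ?M). P \<omega>} = (\<lambda>\<omega>. restrict \<omega> J) -` R \<inter> space (PiM UNIV ?M)"
    by (auto simp: R_def space_PiM invr)
  hence "measure (PiM UNIV ?M) {\<omega> \<in> space (PiM UNIV ?M). P \<omega>}
      = measure (distr (PiM UNIV ?M) (PiM J ?M) (\<lambda>\<omega>. restrict \<omega> J)) R"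
    using R by (simp add: measure_distr)
  also have "\<dots> = measure (PiM J ?M) R"
    using fin by (simp add: distr_PiM_restrict_finite)
  also have "\<dots> = measure (distr (measure_pmf (Pi_pmf J d c)) (PiM J ?M) (\<lambda>f. restrict f J)) R"
    using fin by (simp add: PiM_Pi_pmf)
  also have "\<dots> = measure_pmf.prob (Pi_pmf J d c) ((\<lambda>f. restrict f J) -` R)"
    using R by (subst measure_distr) (auto simp: space_PiM)
  also have "(\<lambda>f. restrict f J) -` R = {f. P f}"
    by (auto simp: R_def space_PiM invr)
  finally show ?thesis .
qed


definition cc :: "real \<Rightarrow> real \<Rightarrow> bool \<times> nat \<times> nat \<Rightarrow> bool pmf" where
  "cc p q = (\<lambda>(b, n, i). bernoulli_pmf (if b then q else p))"

lemma coop_space_eq: "coop_space p q = PiM UNIV (\<lambda>j. measure_pmf (cc p q j))"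
  unfolding coop_space_def cc_def
  by (intro arg_cong[where f="PiM UNIV"] ext) (auto split: prod.splits)

definition JJ :: "nat \<Rightarrow> (bool \<times> nat \<times> nat) set" where
  "JJ n = {(b, k, i). k < n \<and> i < 4 * 3 ^ k}"

definition BB :: "nat \<Rightarrow> (bool \<times> nat \<times> nat) set" where
  "BB n = {(b, k, i). k = n \<and> i < 4 * 3 ^ n}"

lemma finite_JJ: "finite (JJ n)"
proof (rule finite_subset)
  show "JJ n \<subseteq> UNIV \<times> {..<n} \<times> {..<4 * 3 ^ n}"
  proof
    fix x assume "x \<in> JJ n"
    then obtain b k i where x: "x = (b, k, i)" "k < n" "i < 4 * 3 ^ k" by (auto simp: JJ_def)
    have "(3::nat) ^ k \<le> 3 ^ n" using x(2) by (intro power_increasing) auto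
    hence "i < 4 * 3 ^ n" using x(3) by linarith
    thus "x \<in> UNIV \<times> {..<n} \<times> {..<4 * 3 ^ n}" using x by auto
  qed
qed simp

lemma finite_BB: "finite (BB n)"
  by (rule finite_subset[of _ "UNIV \<times> {n} \<times> {..<4 * 3 ^ n}"]) (auto simp: BB_def)

lemma JJ_Suc: "JJ (Suc n) = JJ n \<union> BB n"
  by (auto simp: JJ_def BB_def less_Suc_eq)

lemma JJ_BB_disj: "JJ n \<inter> BB n = {}"
  by (auto simp: JJ_def BB_def)

lemma card_le: "card {i. i < N \<and> P i} \<le> N"
  by (rule order_trans[OF card_mono[of "{..<N}"]]) auto

lemma state_bound: "coop_state \<omega> (1, 1) n = (x, y) \<Longrightarrow> x + y \<le> 2 * 3 ^ n"
proof (induction n arbitrary: x y)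
  case 0 thus ?case by auto
next
  case (Suc n)
  obtain x' y' where st: "coop_state \<omega> (1, 1) n = (x', y')" by (cases "coop_state \<omega> (1, 1) n")
  have IH: "x' + y' \<le> 2 * 3 ^ n" using Suc.IH[OF st] .
  have x: "x = card {i. i < 2 * (x' + y') \<and> \<omega> (True, n, i)}"
   and y: "y = card {i. i < 2 * min x' y' \<and> \<omega> (False, n, i)}"
    using Suc.prems st by auto
  have "x \<le> 2 * (x' + y')" using x card_le by metis
  moreover have "y \<le> 2 * min x' y'" using y card_le by metis
  ultimately show ?case using IH by simp
qed

lemma state_dep:
  "(\<And>j. j \<in> JJ n \<Longrightarrow> \<omega> j = \<omega>' j) \<Longrightarrow> coop_state \<omega> (1, 1) n = coop_state \<omega>' (1, 1) n"
proof (induction n)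
  case 0 thus ?case by simp
next
  case (Suc n)
  have eq: "coop_state \<omega> (1, 1) n = coop_state \<omega>' (1, 1) n"
    using Suc.prems by (intro Suc.IH) (auto simp: JJ_Suc)
  obtain x y where st: "coop_state \<omega> (1, 1) n = (x, y)" by (cases "coop_state \<omega> (1, 1) n")
  have b: "x + y \<le> 2 * 3 ^ n" using state_bound[OF st] .
  have w: "\<omega> (bb, n, i) = \<omega>' (bb, n, i)" if "i < 4 * 3 ^ n" for bb i
    using Suc.prems that by (auto simp: JJ_Suc BB_def)
  have b0: "2 * (x + y) \<le> 4 * 3 ^ n" using b by simp
  have b1: "i < 4 * 3 ^ n" if "i < 2 * (x + y)" for i using that b0 by (rule less_le_trans)
  have b3: "2 * min x y \<le> 2 * (x + y)" by simp
  have b2: "i < 4 * 3 ^ n" if "i < 2 * min x y" for i using that b3 b1 by (meson less_le_trans)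
  have "{i. i < 2 * (x + y) \<and> \<omega> (True, n, i)} = {i. i < 2 * (x + y) \<and> \<omega>' (True, n, i)}"
    using w b1 by blast
  moreover have "{i. i < 2 * min x y \<and> \<omega> (False, n, i)} = {i. i < 2 * min x y \<and> \<omega>' (False, n, i)}"
    using w b2 by blast
  ultimately show ?case using st eq[symmetric] by (simp del: One_nat_def)
qed

definition WW :: "nat \<Rightarrow> nat \<times> nat \<Rightarrow> (bool \<times> nat \<times> nat \<Rightarrow> bool) \<Rightarrow> nat" where
  "WW n s g = (case s of (x, y) \<Rightarrow>
     min (card {i. i < 2 * (x + y) \<and> g (True, n, i)}) (card {i. i < 2 * min x y \<and> g (False, n, i)}))"

lemma Z_Suc_merge:
  "coop_Z (\<lambda>j. if j \<in> JJ n then f j else g j) (1, 1) (Suc n) = WW n (coop_state f (1, 1) n) g"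
proof -
  let ?m = "\<lambda>j. if j \<in> JJ n then f j else g j"
  have eq: "coop_state ?m (1, 1) n = coop_state f (1, 1) n"
    by (rule state_dep) simp
  obtain x y where st: "coop_state f (1, 1) n = (x, y)" by (cases "coop_state f (1, 1) n")
  have nJ: "(b, n, i) \<notin> JJ n" for b i by (simp add: JJ_def)
  show ?thesis using eq st nJ by (simp add: coop_Z_def WW_def)
qed

lemma pmf_bound:
  fixes e :: ennreal
  assumes inner: "\<And>x y n. x + y \<le> 2 * 3 ^ n \<Longrightarrow>
      (\<integral>\<^sup>+g. e ^ WW n (x, y) g \<partial>Pi_pmf (BB n) False cc') \<le> e ^ min x y"
  shows "(\<integral>\<^sup>+f. e ^ coop_Z f (1, 1) n \<partial>Pi_pmf (JJ n) False cc') \<le> e"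
proof (induction n)
  case 0
  show ?case by (simp add: JJ_def coop_Z_def)
next
  case (Suc n)
  have "(\<integral>\<^sup>+f. e ^ coop_Z f (1, 1) (Suc n) \<partial>Pi_pmf (JJ (Suc n)) False cc')
     = (\<integral>\<^sup>+f. \<integral>\<^sup>+g. e ^ coop_Z (\<lambda>j. if j \<in> JJ n then f j else g j) (1, 1) (Suc n)
           \<partial>Pi_pmf (BB n) False cc' \<partial>Pi_pmf (JJ n) False cc')"
    unfolding JJ_Suc
    by (subst Pi_pmf_union[OF finite_JJ finite_BB JJ_BB_disj])
       (simp add: nn_integral_pair_pmf')
  also have "\<dots> = (\<integral>\<^sup>+f. \<integral>\<^sup>+g. e ^ WW n (coop_state f (1, 1) n) g
           \<partial>Pi_pmf (BB n) False cc' \<partial>Pi_pmf (JJ n) False cc')"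
    by (simp only: Z_Suc_merge)
  also have "\<dots> \<le> (\<integral>\<^sup>+f. e ^ coop_Z f (1, 1) n \<partial>Pi_pmf (JJ n) False cc')"
  proof (rule nn_integral_mono)
    fix f
    obtain x y where st: "coop_state f (1, 1) n = (x, y)" by (cases "coop_state f (1, 1) n")
    show "(\<integral>\<^sup>+g. e ^ WW n (coop_state f (1, 1) n) g \<partial>Pi_pmf (BB n) False cc') \<le> e ^ coop_Z f (1, 1) n"
      using inner[OF state_bound[OF st]] st by (simp add: coop_Z_def)
  qed
  also have "\<dots> \<le> e" by (rule Suc.IH)
  finally show ?case .
qed


lemma card_slice:
  "card {x \<in> (\<lambda>i. (b, n, i)) ` {..<N}. f x} = card {i. i < N \<and> f (b, n, i)}"
proof -
  have "{x \<in> (\<lambda>i. (b, n, i)) ` {..<N}. f x} = (\<lambda>i. (b, n, i)) ` {i. i < N \<and> f (b, n, i)}"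
    by auto
  thus ?thesis by (simp add: card_image inj_on_def)
qed

lemma coins_binomial_one:
  assumes "r \<in> {0..1}" "\<And>i. i < N \<Longrightarrow> cc' (b, n, i) = bernoulli_pmf r"
  shows "map_pmf (\<lambda>f. card {i. i < N \<and> f (b, n, i)}) (Pi_pmf ((\<lambda>i. (b, n, i)) ` {..<N}) False cc')
         = binomial_pmf N r"
proof -
  let ?A = "(\<lambda>i. (b, n, i)) ` {..<N}"
  have cA: "card ?A = N" by (simp add: card_image inj_on_def)
  have "Pi_pmf ?A False cc' = Pi_pmf ?A False (\<lambda>_. bernoulli_pmf r)"
    using assms(2) by (intro Pi_pmf_cong) auto
  moreover have "binomial_pmf N r = map_pmf (\<lambda>f. card {x\<in>?A. f x}) (Pi_pmf ?A False (\<lambda>_. bernoulli_pmf r))"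
    by (rule binomial_pmf_altdef'[OF _ cA assms(1)]) simp
  ultimately show ?thesis by (simp add: card_slice)
qed

lemma coins_binomial:
  assumes N: "N \<le> 4 * 3 ^ n" and K: "K \<le> 4 * 3 ^ n" and p: "p \<in> {0..1}" and q: "q \<in> {0..1}"
  shows "map_pmf (\<lambda>g. (card {i. i < N \<and> g (True, n, i)}, card {i. i < K \<and> g (False, n, i)}))
           (Pi_pmf (BB n) False (cc p q)) = pair_pmf (binomial_pmf N q) (binomial_pmf K p)"
proof -
  define AT where "AT = (\<lambda>i. (True, n, i)) ` {..<N}"
  define AF where "AF = (\<lambda>i. (False, n, i)) ` {..<K}"
  define F where "F = (\<lambda>g::bool \<times> nat \<times> nat \<Rightarrow> bool. (card {i. i < N \<and> g (True, n, i)}, card {i. i < K \<and> g (False, n, i)}))"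
  have sub: "AT \<union> AF \<subseteq> BB n" using N K by (auto simp: AT_def AF_def BB_def)
  have fin: "finite AT" "finite AF" by (auto simp: AT_def AF_def)
  have disj: "AT \<inter> AF = {}" by (auto simp: AT_def AF_def)
  have F1: "F (\<lambda>x. if x \<in> AT \<union> AF then g x else False) = F g" for g
  proof -
    have "{i. i < N \<and> (if (True, n, i) \<in> AT \<union> AF then g (True, n, i) else False)} = {i. i < N \<and> g (True, n, i)}"
      by (auto simp: AT_def)
    moreover have "{i. i < K \<and> (if (False, n, i) \<in> AT \<union> AF then g (False, n, i) else False)} = {i. i < K \<and> g (False, n, i)}"
      by (auto simp: AF_def)
    ultimately show ?thesis by (simp add: F_def)
  qed
  have F2: "F (\<lambda>x. if x \<in> AT then f x else g x) = (card {i. i < N \<and> f (True, n, i)}, card {i. i < K \<and> g (False, n, i)})" for f g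
  proof -
    have "{i. i < N \<and> (if (True, n, i) \<in> AT then f (True, n, i) else g (True, n, i))} = {i. i < N \<and> f (True, n, i)}"
      by (auto simp: AT_def)
    moreover have "{i. i < K \<and> (if (False, n, i) \<in> AT then f (False, n, i) else g (False, n, i))} = {i. i < K \<and> g (False, n, i)}"
      by (auto simp: AT_def)
    ultimately show ?thesis by (simp add: F_def)
  qed
  have "map_pmf F (Pi_pmf (BB n) False (cc p q)) = map_pmf F (map_pmf (\<lambda>g x. if x \<in> AT \<union> AF then g x else False) (Pi_pmf (BB n) False (cc p q)))"
    by (simp only: pmf.map_comp o_def F1)
  also have "\<dots> = map_pmf F (Pi_pmf (AT \<union> AF) False (cc p q))"
    by (subst Pi_pmf_subset[OF finite_BB sub]) simp
  also have "\<dots> = map_pmf F (map_pmf (\<lambda>(f,g) x. if x \<in> AT then f x else g x) (pair_pmf (Pi_pmf AT False (cc p q)) (Pi_pmf AF False (cc p q))))"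
    by (subst Pi_pmf_union[OF fin disj]) simp
  also have "\<dots> = map_pmf (\<lambda>(f, g). (card {i. i < N \<and> f (True, n, i)}, card {i. i < K \<and> g (False, n, i)}))
       (pair_pmf (Pi_pmf AT False (cc p q)) (Pi_pmf AF False (cc p q)))"
    by (simp add: pmf.map_comp o_def F2 case_prod_unfold)
  also have "\<dots> = pair_pmf (map_pmf (\<lambda>f. card {i. i < N \<and> f (True, n, i)}) (Pi_pmf AT False (cc p q)))
      (map_pmf (\<lambda>g. card {i. i < K \<and> g (False, n, i)}) (Pi_pmf AF False (cc p q)))"
    by (rule map_pair)
  also have "\<dots> = pair_pmf (binomial_pmf N q) (binomial_pmf K p)"
    unfolding AT_def AF_def
    by (subst coins_binomial_one[OF q], simp add: cc_def) (subst coins_binomial_one[OF p], simp_all add: cc_def)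
  finally show ?thesis by (simp add: F_def)
qed


lemma binomial_add:
  assumes r: "r \<in> {0..1}"
  shows "binomial_pmf (m + k) r = map_pmf (\<lambda>(a, b). a + b) (pair_pmf (binomial_pmf m r) (binomial_pmf k r))"
proof (induction m)
  case 0
  show ?case using r by (simp add: binomial_pmf_0 pair_return_pmf1 pmf.map_comp o_def)
next
  case (Suc m)
  show ?case using r
    by (simp add: binomial_pmf_Suc Suc.IH pair_pmf_def map_bind_pmf bind_map_pmf bind_assoc_pmf
        bind_return_pmf add.assoc)
qed

lemma nn_swap:
  fixes A :: "'a pmf" and B :: "'b pmf"
  shows "(\<integral>\<^sup>+x. \<integral>\<^sup>+y. f x y \<partial>B \<partial>A) = (\<integral>\<^sup>+y. \<integral>\<^sup>+x. f x y \<partial>A \<partial>B)"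
proof -
  have "(\<integral>\<^sup>+x. \<integral>\<^sup>+y. f x y \<partial>B \<partial>A) = (\<integral>\<^sup>+z. f (fst z) (snd z) \<partial>pair_pmf A B)"
    by (simp add: nn_integral_pair_pmf')
  also have "pair_pmf A B = map_pmf (\<lambda>(x, y). (y, x)) (pair_pmf B A)"
    by (rule pair_commute_pmf)
  also have "(\<integral>\<^sup>+z. f (fst z) (snd z) \<partial>map_pmf (\<lambda>(x, y). (y, x)) (pair_pmf B A)) = (\<integral>\<^sup>+y. \<integral>\<^sup>+x. f x y \<partial>A \<partial>B)"
    by (simp add: nn_integral_pair_pmf' case_prod_unfold)
  finally show ?thesis .
qed

lemma epow_mono:
  fixes e :: ennreal
  assumes "e \<le> 1" "b \<le> a"
  shows "e ^ a \<le> e ^ b"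
  using assms by (intro power_decreasing) auto

lemma binlemma:
  fixes e :: ennreal
  assumes e1: "e \<le> 1" and p: "p \<in> {0..1}" and q: "q \<in> {0..1}"
    and base: "(\<integral>\<^sup>+u. \<integral>\<^sup>+v. e ^ min u v \<partial>binomial_pmf 2 p \<partial>binomial_pmf 4 q) \<le> e"
  shows "4 * z \<le> N \<Longrightarrow> (\<integral>\<^sup>+u. \<integral>\<^sup>+v. e ^ min u v \<partial>binomial_pmf (2 * z) p \<partial>binomial_pmf N q) \<le> e ^ z"
proof (induction z arbitrary: N)
  case 0
  show ?case using p by (simp add: binomial_pmf_0 measure_pmf.emeasure_space_1)
next
  case (Suc z)
  define N' where "N' = N - 4"
  have NN: "N = N' + 4" and N': "4 * z \<le> N'" using Suc.prems by (auto simp: N'_def)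
  have KK: "2 * Suc z = 2 * z + 2" by simp
  define G where "G = (\<lambda>u2. \<integral>\<^sup>+v2. e ^ min u2 v2 \<partial>binomial_pmf 2 p)"
  have "(\<integral>\<^sup>+u. \<integral>\<^sup>+v. e ^ min u v \<partial>binomial_pmf (2 * Suc z) p \<partial>binomial_pmf N q)
     = (\<integral>\<^sup>+u1. \<integral>\<^sup>+u2. \<integral>\<^sup>+v1. \<integral>\<^sup>+v2. e ^ min (u1 + u2) (v1 + v2)
         \<partial>binomial_pmf 2 p \<partial>binomial_pmf (2 * z) p \<partial>binomial_pmf 4 q \<partial>binomial_pmf N' q)"
    unfolding NN KK
    by (simp only: binomial_add[OF p, of "2*z" 2] binomial_add[OF q, of N' 4])
       (simp add: nn_integral_pair_pmf' case_prod_unfold)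
  also have "\<dots> \<le> (\<integral>\<^sup>+u1. \<integral>\<^sup>+u2. \<integral>\<^sup>+v1. \<integral>\<^sup>+v2. e ^ min u1 v1 * e ^ min u2 v2
         \<partial>binomial_pmf 2 p \<partial>binomial_pmf (2 * z) p \<partial>binomial_pmf 4 q \<partial>binomial_pmf N' q)"
  proof (intro nn_integral_mono)
    fix u1 u2 v1 v2 :: nat
    have "min u1 v1 + min u2 v2 \<le> min (u1 + u2) (v1 + v2)" by linarith
    hence "e ^ min (u1 + u2) (v1 + v2) \<le> e ^ (min u1 v1 + min u2 v2)" by (rule epow_mono[OF e1])
    thus "e ^ min (u1 + u2) (v1 + v2) \<le> e ^ min u1 v1 * e ^ min u2 v2" by (simp add: power_add)
  qed
  also have "\<dots> = (\<integral>\<^sup>+u1. \<integral>\<^sup>+u2. \<integral>\<^sup>+v1. e ^ min u1 v1 * G u2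
         \<partial>binomial_pmf (2 * z) p \<partial>binomial_pmf 4 q \<partial>binomial_pmf N' q)"
    by (simp add: G_def nn_integral_cmult)
  also have "\<dots> = (\<integral>\<^sup>+u1. \<integral>\<^sup>+v1. \<integral>\<^sup>+u2. e ^ min u1 v1 * G u2
         \<partial>binomial_pmf 4 q \<partial>binomial_pmf (2 * z) p \<partial>binomial_pmf N' q)"
    by (subst nn_swap) (rule refl)
  also have "\<dots> = (\<integral>\<^sup>+u1. \<integral>\<^sup>+v1. e ^ min u1 v1 \<partial>binomial_pmf (2 * z) p \<partial>binomial_pmf N' q)
      * (\<integral>\<^sup>+u2. G u2 \<partial>binomial_pmf 4 q)"
    by (simp add: nn_integral_cmult nn_integral_multc)
  also have "\<dots> \<le> e ^ z * e"
    using Suc.IH[OF N'] base unfolding G_def by (intro mult_mono) auto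
  finally show ?case by (simp add: mult.commute)
qed


lemma nn_fin:
  assumes "finite (set_pmf M)" "\<And>x. 0 \<le> f x"
  shows "(\<integral>\<^sup>+x. ennreal (f x) \<partial>measure_pmf M) = ennreal (\<Sum>x\<in>set_pmf M. f x * pmf M x)"
  using assms by (simp add: nn_integral_measure_pmf_finite ennreal_mult sum_ennreal[symmetric])

definition a0 :: "real \<Rightarrow> real \<Rightarrow> real" where
  "a0 p q = (1-q)^4 + (1-(1-q)^4)*(1-p)^2"
definition a2 :: "real \<Rightarrow> real \<Rightarrow> real" where
  "a2 p q = (1-(1-q)^4-4*q*(1-q)^3)*p^2"

lemma h_eq: "coop_h p q = 1 - a0 p q + a2 p q"
  unfolding coop_h_def a0_def a2_def by algebra

lemma sum_eq:
  assumes "p \<in> {0..1}" "q \<in> {0..1}"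
  shows "(\<Sum>u\<le>4. (\<Sum>v\<le>2. s ^ min u v * pmf (binomial_pmf 2 p) v) * pmf (binomial_pmf 4 q) u)
   = s + (1 - s) * (a0 p q - a2 p q * s)"
  using assms by (simp add: pmf_binomial numeral_eq_Suc a0_def a2_def) algebra


lemma transfer_sets:
  fixes c :: "'a \<Rightarrow> 'b::finite pmf"
  assumes fin: "finite J"
    and inv: "\<And>\<omega> \<omega>'. (\<And>j. j \<in> J \<Longrightarrow> \<omega> j = \<omega>' j) \<Longrightarrow> P \<omega> = P \<omega>'"
  shows "{\<omega> \<in> space (PiM UNIV (\<lambda>j. measure_pmf (c j))). P \<omega>} \<in> sets (PiM UNIV (\<lambda>j. measure_pmf (c j)))"
proof -
  let ?M = "\<lambda>j. measure_pmf (c j)"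
  have invr: "P (restrict \<omega> J) = P \<omega>" for \<omega> by (rule inv) simp
  define R where "R = {a \<in> space (PiM J ?M). P a}"
  have finR: "finite (space (PiM J ?M))"
    using fin by (simp add: space_PiM finite_PiE)
  have R: "R \<in> sets (PiM J ?M)"
  proof (rule sets.countable)
    fix a assume "a \<in> R"
    hence "a \<in> PiE J (\<lambda>_. UNIV)" by (simp add: R_def space_PiM)
    hence "{a} = PiE J (\<lambda>j. {a j})" by (auto simp: PiE_iff extensional_def fun_eq_iff) metis
    thus "{a} \<in> sets (PiM J ?M)" using fin by (auto intro!: sets_PiM_I_finite)
  next
    show "countable R" using finR by (intro countable_finite) (auto simp: R_def)
  qed
  have "{\<omega> \<in> space (PiM UNIV ?M). P \<omega>} = (\<lambda>\<omega>. restrict \<omega> J) -` R \<inter> space (PiM UNIV ?M)"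
    by (auto simp: R_def space_PiM invr)
  also have "\<dots> \<in> sets (PiM UNIV ?M)"
    by (rule measurable_sets[OF measurable_restrict_subset R]) simp
  finally show ?thesis .
qed

lemma Z_zero_Suc: "coop_Z \<omega> s n = 0 \<Longrightarrow> coop_Z \<omega> s (Suc n) = 0"
  by (cases "coop_state \<omega> s n") (auto simp: coop_Z_def min_def split: if_splits)

lemma Z_dep: "(\<And>j. j \<in> JJ n \<Longrightarrow> \<omega> j = \<omega>' j) \<Longrightarrow> coop_Z \<omega> (1, 1) n = coop_Z \<omega>' (1, 1) n"
  unfolding coop_Z_def using state_dep by metis

theorem mainTheorem16:
  fixes p q :: real
  assumes "0 < p" "p < 1" "0 < q" "q < 1"
    and "coop_h p q > 1"
  shows "measure (coop_space p q) (coop_survive p q (1, 1)) > 0"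
proof -
  have p: "p \<in> {0..1}" and q: "q \<in> {0..1}" using assms by auto
  have a0nn: "a0 p q \<ge> 0"
  proof -
    have "(1 - q) ^ 4 \<le> 1" using assms by (intro power_le_one) auto
    thus ?thesis unfolding a0_def using assms by (intro add_nonneg_nonneg mult_nonneg_nonneg) auto
  qed
  have a20: "a2 p q > a0 p q" using assms(5) h_eq[of p q] by linarith
  hence a2pos: "a2 p q > 0" using a0nn by linarith
  define s where "s = a0 p q / a2 p q"
  have s0: "0 \<le> s" using a0nn a2pos by (simp add: s_def)
  have s1: "s < 1" using a20 a2pos by (simp add: s_def)
  have fixpt: "a0 p q - a2 p q * s = 0" using a2pos by (simp add: s_def)
  define e where "e = ennreal s"
  have e1: "e \<le> 1" using s1 by (simp add: e_def)
  have epow: "e ^ k = ennreal (s ^ k)" for k using s0 by (simp add: e_def ennreal_power)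
  have base: "(\<integral>\<^sup>+u. \<integral>\<^sup>+v. e ^ min u v \<partial>binomial_pmf 2 p \<partial>binomial_pmf 4 q) \<le> e"
  proof -
    have sp: "set_pmf (binomial_pmf 2 p) = {..2}" "set_pmf (binomial_pmf 4 q) = {..4}"
      using assms by (simp_all only: set_pmf_binomial)
    have i1: "(\<integral>\<^sup>+v. e ^ min u v \<partial>binomial_pmf 2 p) = ennreal (\<Sum>v\<le>2. s ^ min u v * pmf (binomial_pmf 2 p) v)" for u
    proof -
      have "(\<integral>\<^sup>+v. e ^ min u v \<partial>binomial_pmf 2 p) = (\<integral>\<^sup>+v. ennreal (s ^ min u v) \<partial>binomial_pmf 2 p)"
        by (simp only: epow)
      also have "\<dots> = ennreal (\<Sum>v\<in>set_pmf (binomial_pmf 2 p). s ^ min u v * pmf (binomial_pmf 2 p) v)"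
        by (rule nn_fin) (use s0 sp in auto)
      finally show ?thesis by (simp only: sp)
    qed
    have "(\<integral>\<^sup>+u. \<integral>\<^sup>+v. e ^ min u v \<partial>binomial_pmf 2 p \<partial>binomial_pmf 4 q)
        = (\<integral>\<^sup>+u. ennreal (\<Sum>v\<le>2. s ^ min u v * pmf (binomial_pmf 2 p) v) \<partial>binomial_pmf 4 q)"
      by (simp only: i1)
    also have "\<dots> = ennreal (\<Sum>u\<in>set_pmf (binomial_pmf 4 q). (\<Sum>v\<le>2. s ^ min u v * pmf (binomial_pmf 2 p) v) * pmf (binomial_pmf 4 q) u)"
      by (rule nn_fin) (use s0 sp in \<open>auto intro!: sum_nonneg\<close>)
    also have "\<dots> = e"
    proof -
      have "(\<Sum>u\<le>4. (\<Sum>v\<le>2. s ^ min u v * pmf (binomial_pmf 2 p) v) * pmf (binomial_pmf 4 q) u)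
          = s + (1 - s) * (a0 p q - a2 p q * s)" by (rule sum_eq[OF p q])
      also have "\<dots> = s" by (simp only: fixpt mult_zero_right add_0_right)
      finally show ?thesis by (simp only: sp e_def)
    qed
    finally show ?thesis by simp
  qed
  have inner: "(\<integral>\<^sup>+g. e ^ WW n (x, y) g \<partial>Pi_pmf (BB n) False (cc p q)) \<le> e ^ min x y"
    if xy: "x + y \<le> 2 * 3 ^ n" for x y n
  proof -
    have N: "2 * (x + y) \<le> 4 * 3 ^ n" using xy by simp
    have K: "2 * min x y \<le> 4 * 3 ^ n" using N by (rule order_trans[rotated]) simp
    have "(\<integral>\<^sup>+g. e ^ WW n (x, y) g \<partial>Pi_pmf (BB n) False (cc p q))
       = (\<integral>\<^sup>+w. e ^ min (fst w) (snd w) \<partial>map_pmf (\<lambda>g. (card {i. i < 2 * (x + y) \<and> g (True, n, i)},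
            card {i. i < 2 * min x y \<and> g (False, n, i)})) (Pi_pmf (BB n) False (cc p q)))"
      unfolding WW_def by (simp only: nn_integral_map_pmf prod.case fst_conv snd_conv)
    also have "\<dots> = (\<integral>\<^sup>+u. \<integral>\<^sup>+v. e ^ min u v \<partial>binomial_pmf (2 * min x y) p \<partial>binomial_pmf (2 * (x + y)) q)"
      by (subst coins_binomial[OF N K p q]) (simp add: nn_integral_pair_pmf')
    also have "\<dots> \<le> e ^ min x y"
      by (rule binlemma[OF e1 p q base]) simp
    finally show ?thesis .
  qed
  let ?M = "coop_space p q"
  interpret PS: prob_space ?M
    unfolding coop_space_eq by (intro prob_space_PiM measure_pmf.prob_space_axioms)
  have zero_bound: "measure ?M {\<omega> \<in> space ?M. coop_Z \<omega> (1, 1) n = 0} \<le> s" for n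
  proof -
    have "measure ?M {\<omega> \<in> space ?M. coop_Z \<omega> (1, 1) n = 0}
        = measure_pmf.prob (Pi_pmf (JJ n) False (cc p q)) {f. coop_Z f (1, 1) n = 0}"
      unfolding coop_space_eq by (rule transfer_PiM[OF finite_JJ]) (metis Z_dep)
    moreover have "ennreal (measure_pmf.prob (Pi_pmf (JJ n) False (cc p q)) {f. coop_Z f (1, 1) n = 0}) \<le> e"
    proof -
      have "ennreal (measure_pmf.prob (Pi_pmf (JJ n) False (cc p q)) {f. coop_Z f (1, 1) n = 0})
          = (\<integral>\<^sup>+f. indicator {f. coop_Z f (1, 1) n = 0} f \<partial>Pi_pmf (JJ n) False (cc p q))"
        by (simp add: measure_pmf.emeasure_eq_measure[symmetric])
      also have "\<dots> \<le> (\<integral>\<^sup>+f. e ^ coop_Z f (1, 1) n \<partial>Pi_pmf (JJ n) False (cc p q))"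
        by (intro nn_integral_mono) (auto simp: indicator_def)
      also have "\<dots> \<le> e" by (rule pmf_bound) (rule inner)
      finally show ?thesis .
    qed
    ultimately show ?thesis using s0 by (simp add: e_def)
  qed
  define A where "A n = {\<omega> \<in> space ?M. coop_Z \<omega> (1, 1) n \<noteq> 0}" for n
  have Asets: "A n \<in> sets ?M" for n
  proof -
    have Zd: "coop_Z \<omega> (1, 1) n = coop_Z \<omega>' (1, 1) n" if "\<And>j. j \<in> JJ n \<Longrightarrow> \<omega> j = \<omega>' j" for \<omega> \<omega>'
      using that by (rule Z_dep)
    have "{\<omega> \<in> space (PiM UNIV (\<lambda>j. measure_pmf (cc p q j))). coop_Z \<omega> (1, 1) n \<noteq> 0}
       \<in> sets (PiM UNIV (\<lambda>j. measure_pmf (cc p q j)))"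
    proof (rule transfer_sets[OF finite_JJ, where P="\<lambda>\<omega>. coop_Z \<omega> (1, 1) n \<noteq> 0"])
      fix \<omega> \<omega>' :: "bool \<times> nat \<times> nat \<Rightarrow> bool"
      assume "\<And>j. j \<in> JJ n \<Longrightarrow> \<omega> j = \<omega>' j"
      hence "coop_Z \<omega> (1, 1) n = coop_Z \<omega>' (1, 1) n" by (rule Zd)
      thus "(coop_Z \<omega> (1, 1) n \<noteq> 0) = (coop_Z \<omega>' (1, 1) n \<noteq> 0)" by simp
    qed
    thus ?thesis by (simp only: A_def coop_space_eq)
  qed
  have Ameas: "measure ?M (A n) \<ge> 1 - s" for n
  proof -
    have "A n = space ?M - {\<omega> \<in> space ?M. coop_Z \<omega> (1, 1) n = 0}" by (auto simp: A_def)
    moreover have "{\<omega> \<in> space ?M. coop_Z \<omega> (1, 1) n = 0} \<in> sets ?M"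
    proof -
      have "{\<omega> \<in> space ?M. coop_Z \<omega> (1, 1) n = 0} = space ?M - A n" by (auto simp: A_def)
      thus ?thesis using Asets by auto
    qed
    ultimately show ?thesis using zero_bound[of n] by (simp add: PS.prob_compl)
  qed
  have dec: "decseq A"
    unfolding decseq_Suc_iff
  proof
    fix n show "A (Suc n) \<subseteq> A n"
    proof
      fix \<omega> assume "\<omega> \<in> A (Suc n)"
      hence w1: "\<omega> \<in> space ?M" and w2: "coop_Z \<omega> (1, 1) (Suc n) \<noteq> 0" by (auto simp: A_def)
      have "coop_Z \<omega> (1, 1) n \<noteq> 0" using Z_zero_Suc[of \<omega> "(1, 1)" n] w2 by blast
      thus "\<omega> \<in> A n" using w1 by (simp add: A_def)
    qed
  qed
  have surv: "coop_survive p q (1, 1) = (\<Inter>n. A n)"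
    by (auto simp: coop_survive_def A_def)
  have "(\<lambda>n. measure ?M (A n)) \<longlonglongrightarrow> measure ?M (\<Inter>n. A n)"
    by (rule PS.finite_Lim_measure_decseq) (use Asets dec in auto)
  hence "1 - s \<le> measure ?M (\<Inter>n. A n)"
    by (rule LIMSEQ_le_const) (use Ameas in auto)
  thus ?thesis using s1 surv by simp
qed

end
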